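(* Let $G=(V,E)$ be a connected finite simple graph that is bijective, i.e. $G$ has exactly one cycle and this cycle has odd length; let $A$ be its incidence matrix and $\lambda\in\mathbb{R}_{>0}^n$, and let $\mu$ be the unique solution of $A\mu=\lambda$ (which is the vector of matching rates of the problem $(G,\lambda)$ under any stabilizing policy). Let $k\in E$. (i) If edge $k$ does not belong to the cycle of $G$, then removing $k$ separates $G$ into a tree and a unicyclic graph; letting $V_k\subseteq V$ be the node set of the tree part (which contains one endpoint of $k$), we have $\mu_k=\sum_{i\in V_k}(-1)^{d_{i,k}}\lambda_i$. (ii) If edge $k$ belongs to the cycle of $G$, then $\mu_k=\frac12\sum_{i\in V}(-1)^{d_{i,k}}\lambda_i$. Here $d_{i,k}$ denotes the minimum of the graph distances from node $i$ to the two endpoints of edge $k$.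
   Context: The incidence matrix $A$ of $G$ (with $V=\{1,\dots,n\}$, $E=\{e_1,\dots,e_m\}$) is the $n\times m$ matrix with $a_{i,k}=1$ if node $i$ is an endpoint of $e_k$ and $0$ otherwise; for a bijective graph $m=n$ and $A$ is invertible. The equation $A\mu=\lambda$ reads $\sum_{k\in E_i}\mu_k=\lambda_i$ for every node $i$, where $E_i$ is the set of edges incident to $i$. *)

theory Defs
  imports Complex_Main
begin

definition simple_graph :: "'a set \<Rightarrow> 'a set set \<Rightarrow> bool" where
  "simple_graph V E \<longleftrightarrow> finite V \<and>
     (\<forall>e\<in>E. \<exists>u v. u \<in> V \<and> v \<in> V \<and> u \<noteq> v \<and> e = {u, v})"

definition walk :: "'a set set \<Rightarrow> 'a list \<Rightarrow> bool" where
  "walk E xs \<longleftrightarrow> xs \<noteq> [] \<and> (\<forall>i. i + 1 < length xs \<longrightarrow> {xs ! i, xs ! (i + 1)} \<in> E)"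

definition reachable :: "'a set set \<Rightarrow> 'a \<Rightarrow> 'a \<Rightarrow> bool" where
  "reachable E u v \<longleftrightarrow> (\<exists>xs. walk E xs \<and> hd xs = u \<and> last xs = v)"

definition connected_graph :: "'a set \<Rightarrow> 'a set set \<Rightarrow> bool" where
  "connected_graph V E \<longleftrightarrow> V \<noteq> {} \<and> (\<forall>u\<in>V. \<forall>v\<in>V. reachable E u v)"

definition gdist :: "'a set set \<Rightarrow> 'a \<Rightarrow> 'a \<Rightarrow> nat" where
  "gdist E u v = (LEAST n. \<exists>xs. walk E xs \<and> hd xs = u \<and> last xs = v \<and> length xs = n + 1)"

definition edge_dist :: "'a set set \<Rightarrow> 'a \<Rightarrow> 'a set \<Rightarrow> nat" where
  "edge_dist E i k = Min ((\<lambda>v. gdist E i v) ` k)"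

definition cycle_edges :: "'a list \<Rightarrow> 'a set set" where
  "cycle_edges vs = {{vs ! i, vs ! ((i + 1) mod length vs)} | i. i < length vs}"

definition is_cycle :: "'a set set \<Rightarrow> 'a set set \<Rightarrow> bool" where
  "is_cycle E C \<longleftrightarrow> (\<exists>vs. length vs \<ge> 3 \<and> distinct vs \<and> C = cycle_edges vs \<and> C \<subseteq> E)"

definition bijective_graph :: "'a set \<Rightarrow> 'a set set \<Rightarrow> bool" where
  "bijective_graph V E \<longleftrightarrow> simple_graph V E \<and> connected_graph V E \<and>
     (\<exists>C. is_cycle E C \<and> odd (card C) \<and> (\<forall>C'. is_cycle E C' \<longrightarrow> C' = C))"

definition is_component :: "'a set \<Rightarrow> 'a set set \<Rightarrow> 'a set \<Rightarrow> bool" where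
  "is_component V E' C \<longleftrightarrow> (\<exists>x\<in>V. C = {v \<in> V. reachable E' x v})"

definition acyclic_on :: "'a set set \<Rightarrow> 'a set \<Rightarrow> bool" where
  "acyclic_on E' C \<longleftrightarrow> \<not> (\<exists>Cy. is_cycle {e \<in> E'. e \<subseteq> C} Cy)"

end

theory Submission
  imports Defs
begin

lemma walk_single[simp]: "walk E [x]"
  by (simp add: walk_def)

lemma walk_Cons2[simp]: "walk E (x # y # xs) \<longleftrightarrow> {x,y} \<in> E \<and> walk E (y # xs)"
proof
  assume h: "walk E (x # y # xs)"
  have "{x,y} \<in> E" using h unfolding walk_def by (metis (no_types) One_nat_def add_0 length_Cons nth_Cons_0 nth_Cons_Suc zero_less_Suc Suc_less_eq)
  moreover have "walk E (y # xs)" unfolding walk_def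
  proof (intro conjI allI impI)
    fix i assume "i + 1 < length (y # xs)"
    then have "Suc i + 1 < length (x # y # xs)" by simp
    then have "{(x # y # xs) ! Suc i, (x # y # xs) ! (Suc i + 1)} \<in> E" using h unfolding walk_def by blast
    then show "{(y # xs) ! i, (y # xs) ! (i + 1)} \<in> E" by simp
  qed simp
  ultimately show "{x,y} \<in> E \<and> walk E (y # xs)" by simp
next
  assume h: "{x,y} \<in> E \<and> walk E (y # xs)"
  show "walk E (x # y # xs)" unfolding walk_def
  proof (intro conjI allI impI)
    fix i assume i: "i + 1 < length (x # y # xs)"
    show "{(x # y # xs) ! i, (x # y # xs) ! (i + 1)} \<in> E"
    proof (cases i)
      case 0 then show ?thesis using h by simp
    next
      case (Suc j) then show ?thesis using h i unfolding walk_def by auto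
    qed
  qed simp
qed

lemma walk_nonempty: "walk E xs \<Longrightarrow> xs \<noteq> []" by (simp add: walk_def)

lemma walk_append:
  "xs \<noteq> [] \<Longrightarrow> ys \<noteq> [] \<Longrightarrow> walk E (xs @ ys) \<longleftrightarrow> walk E xs \<and> walk E ys \<and> {last xs, hd ys} \<in> E"
proof (induction xs)
  case Nil then show ?case by simp
next
  case (Cons x xs)
  show ?case
  proof (cases "xs = []")
    case True
    then show ?thesis using Cons.prems by (cases ys) auto
  next
    case False
    then obtain x' xs' where xs: "xs = x' # xs'" by (cases xs) auto
    have "walk E ((x # xs) @ ys) \<longleftrightarrow> {x,x'} \<in> E \<and> walk E (xs @ ys)" by (simp add: xs)
    also have "\<dots> \<longleftrightarrow> {x,x'} \<in> E \<and> walk E xs \<and> walk E ys \<and> {last xs, hd ys} \<in> E"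
      using Cons.IH[OF False Cons.prems(2)] by simp
    finally show ?thesis using xs by simp
  qed
qed

lemma walk_mono: "walk E xs \<Longrightarrow> E \<subseteq> E' \<Longrightarrow> walk E' xs"
  unfolding walk_def by blast

lemma walk_drop: "walk E xs \<Longrightarrow> n < length xs \<Longrightarrow> walk E (drop n xs)"
  unfolding walk_def by auto

lemma walk_take: "walk E xs \<Longrightarrow> 0 < n \<Longrightarrow> walk E (take n xs)"
  unfolding walk_def by auto

lemma walk_rev: "walk E xs \<Longrightarrow> walk E (rev xs)"
proof (induction xs)
  case Nil then show ?case by (simp add: walk_def)
next
  case (Cons x xs)
  show ?case
  proof (cases xs)
    case Nil then show ?thesis by simp
  next
    case (Cons y ys)
    then have "{x,y} \<in> E" "walk E xs" using Cons.prems by auto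
    then show ?thesis using Cons Cons.IH walk_append[of "rev xs" "[x]" E]
      by (simp add: insert_commute last_rev)
  qed
qed

lemma reach_refl: "reachable E x x"
  unfolding reachable_def by (intro exI[of _ "[x]"]) simp

lemma reach_sym: "reachable E x y \<Longrightarrow> reachable E y x"
  unfolding reachable_def
  by (metis hd_rev last_rev walk_nonempty walk_rev)

lemma reach_trans: assumes "reachable E x y" "reachable E y z" shows "reachable E x z"
proof -
  obtain xs where xs: "walk E xs" "hd xs = x" "last xs = y" using assms(1) reachable_def by metis
  obtain ys where ys: "walk E ys" "hd ys = y" "last ys = z" using assms(2) reachable_def by metis
  show ?thesis
  proof (cases "tl ys = []")
    case True
    then have "ys = [y]" using ys walk_nonempty by (metis hd_Cons_tl)
    then show ?thesis using xs ys unfolding reachable_def by auto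
  next
    case False
    have ys': "ys = y # tl ys" using ys walk_nonempty by (metis hd_Cons_tl)
    have "walk E (tl ys)" using ys(1) ys' False by (metis hd_Cons_tl walk_Cons2)
    moreover have "{y, hd (tl ys)} \<in> E" using ys(1) ys' False
      by (metis hd_Cons_tl walk_Cons2)
    ultimately have "walk E (xs @ tl ys)" using walk_append xs walk_nonempty False by metis
    moreover have "last (xs @ tl ys) = z" using False ys ys' by (metis last_ConsR last_appendR)
    ultimately show ?thesis using xs walk_nonempty unfolding reachable_def by (metis hd_append)
  qed
qed

lemma reach_edge: "reachable E x y \<Longrightarrow> {y,z} \<in> E \<Longrightarrow> reachable E x z"
  by (metis reach_trans reachable_def walk_Cons2 walk_single last_ConsL last_ConsR list.discI list.sel(1))

lemma reach_mono: "reachable E x y \<Longrightarrow> E \<subseteq> E' \<Longrightarrow> reachable E' x y"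
  unfolding reachable_def using walk_mono by metis

lemma gdist_walk:
  assumes "reachable E u v"
  shows "\<exists>xs. walk E xs \<and> hd xs = u \<and> last xs = v \<and> length xs = gdist E u v + 1"
proof -
  obtain xs where xs: "walk E xs" "hd xs = u" "last xs = v" using assms reachable_def by metis
  have "length xs > 0" using xs(1) walk_nonempty by blast
  then have "\<exists>n. \<exists>xs. walk E xs \<and> hd xs = u \<and> last xs = v \<and> length xs = n + 1"
    using xs by (intro exI[of _ "length xs - 1"] exI[of _ xs]) simp
  then show ?thesis unfolding gdist_def by (rule LeastI_ex)
qed

lemma gdist_le:
  assumes "walk E xs" "hd xs = u" "last xs = v"
  shows "gdist E u v \<le> length xs - 1"
proof -
  have "length xs > 0" using assms(1) walk_nonempty by blast
  then have "\<exists>ys. walk E ys \<and> hd ys = u \<and> last ys = v \<and> length ys = (length xs - 1) + 1"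
    using assms by (intro exI[of _ xs]) simp
  then show ?thesis unfolding gdist_def by (rule Least_le)
qed

lemma gdist_refl[simp]: "gdist E u u = 0"
  using gdist_le[of E "[u]" u u] by simp

lemma gdist_zero: "reachable E u v \<Longrightarrow> gdist E u v = 0 \<Longrightarrow> u = v"
proof -
  assume r: "reachable E u v" and z: "gdist E u v = 0"
  obtain xs where xs: "walk E xs" "hd xs = u" "last xs = v" "length xs = 1"
    using gdist_walk[OF r] z by auto
  then obtain x where "xs = [x]" by (cases xs) auto
  then show "u = v" using xs by simp
qed

lemma gdist_edge:
  assumes "{u,v} \<in> E" "reachable E u t"
  shows "gdist E v t \<le> gdist E u t + 1"
proof -
  obtain xs where xs: "walk E xs" "hd xs = u" "last xs = t" "length xs = gdist E u t + 1"
    using gdist_walk[OF assms(2)] by blast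
  obtain rest where xs': "xs = u # rest" using xs(1,2) walk_nonempty by (cases xs) auto
  have "{v,u} \<in> E" using assms(1) by (simp add: insert_commute)
  then have w: "walk E (v # xs)" using xs' xs(1) by simp
  have "last (v # xs) = t" using xs(3) xs' by simp
  then have "gdist E v t \<le> length (v # xs) - 1" using gdist_le[OF w] by simp
  then show ?thesis using xs by simp
qed

lemma gdist_parent:
  assumes "reachable E u t" "gdist E u t = Suc n"
  shows "\<exists>w. {u,w} \<in> E \<and> gdist E w t = n \<and> reachable E w t"
proof -
  obtain xs where xs: "walk E xs" "hd xs = u" "last xs = t" "length xs = Suc n + 1"
    using gdist_walk[OF assms(1)] assms(2) by metis
  obtain w rest where xs': "xs = u # w # rest"
    using xs(2,4) by (cases xs; cases "tl xs") auto
  have e: "{u,w} \<in> E" and w: "walk E (w # rest)" using xs(1) xs' by auto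
  have l: "last (w # rest) = t" using xs xs' by simp
  have r: "reachable E w t" using w l unfolding reachable_def by (intro exI[of _ "w # rest"]) simp
  have "gdist E w t \<le> length (w # rest) - 1" using gdist_le[OF w _ l] by simp
  then have "gdist E w t \<le> n" using xs(4) xs' by simp
  moreover have "gdist E u t \<le> gdist E w t + 1" using gdist_edge[of w u E t] e r
    by (simp add: insert_commute)
  ultimately show ?thesis using e r assms(2) by (intro exI[of _ w]) simp
qed

lemma ce_mem: "i < length vs \<Longrightarrow> {vs ! i, vs ! ((i + 1) mod length vs)} \<in> cycle_edges vs"
  unfolding cycle_edges_def by blast

lemma ce_walk_edge: "i + 1 < length vs \<Longrightarrow> {vs ! i, vs ! (i + 1)} \<in> cycle_edges vs"
  using ce_mem[of i vs] by simp

lemma ce_last: "vs \<noteq> [] \<Longrightarrow> {last vs, hd vs} \<in> cycle_edges vs"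
proof -
  assume "vs \<noteq> []"
  then have "length vs - 1 < length vs" "(length vs - 1 + 1) mod length vs = 0" by auto
  then show ?thesis using ce_mem[of "length vs - 1" vs] \<open>vs \<noteq> []\<close>
    by (simp add: last_conv_nth hd_conv_nth)
qed

lemma ce_cases:
  assumes "x \<in> cycle_edges vs"
  shows "(\<exists>i. i + 1 < length vs \<and> x = {vs ! i, vs ! (i + 1)}) \<or> x = {last vs, hd vs}"
proof -
  obtain i where i: "i < length vs" "x = {vs ! i, vs ! ((i + 1) mod length vs)}"
    using assms unfolding cycle_edges_def by blast
  show ?thesis
  proof (cases "i + 1 < length vs")
    case True then show ?thesis using i by auto
  next
    case False
    then have n: "i + 1 = length vs" using i by simp
    then have h: "i = length vs - 1" "(i + 1) mod length vs = 0" by auto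
    have ne: "vs \<noteq> []" using i by auto
    have "x = {last vs, hd vs}" using i(2) h ne by (simp add: last_conv_nth hd_conv_nth)
    then show ?thesis by simp
  qed
qed

lemma ce_sub:
  assumes "walk E' vs" "{last vs, hd vs} \<in> E'"
  shows "cycle_edges vs \<subseteq> E'"
  using ce_cases assms unfolding walk_def by blast

lemma ce_walk: "cycle_edges vs \<subseteq> E' \<Longrightarrow> vs \<noteq> [] \<Longrightarrow> walk E' vs"
  unfolding walk_def using ce_walk_edge by blast

lemma ce_subset_set: "x \<in> cycle_edges vs \<Longrightarrow> x \<subseteq> set vs"
proof -
  assume "x \<in> cycle_edges vs"
  then obtain i where i: "i < length vs" "x = {vs ! i, vs ! ((i + 1) mod length vs)}"
    unfolding cycle_edges_def by blast
  have "(i + 1) mod length vs < length vs" using i(1) by (intro mod_less_divisor) auto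
  then show ?thesis using i by (simp add: nth_mem)
qed

lemma ce_card:
  assumes "distinct vs" "length vs \<ge> 3"
  shows "card (cycle_edges vs) = length vs"
proof -
  define n where "n = length vs"
  define f where "f = (\<lambda>i. {vs ! i, vs ! ((i + 1) mod n)})"
  have n3: "n \<ge> 3" using assms(2) n_def by simp
  have eq: "cycle_edges vs = f ` {..<n}" unfolding cycle_edges_def f_def n_def lessThan_def by (rule setcompr_eq_image)
  have inj: "\<And>p q. p < n \<Longrightarrow> q < n \<Longrightarrow> vs ! p = vs ! q \<Longrightarrow> p = q"
    using assms(1) nth_eq_iff_index_eq n_def by blast
  have "inj_on f {..<n}"
  proof (rule inj_onI)
    fix i j assume i0: "i \<in> {..<n}" and j0: "j \<in> {..<n}" and f: "f i = f j"
    have i: "i < n" and j: "j < n" using i0 j0 by auto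
    have mi: "(i + 1) mod n < n" "(j + 1) mod n < n" using n3 by (auto intro: mod_less_divisor)
    have "{vs ! i, vs ! ((i + 1) mod n)} = {vs ! j, vs ! ((j + 1) mod n)}" using f unfolding f_def by simp
    then have "(vs ! i = vs ! j \<and> vs ! ((i + 1) mod n) = vs ! ((j + 1) mod n)) \<or>
        (vs ! i = vs ! ((j + 1) mod n) \<and> vs ! ((i + 1) mod n) = vs ! j)"
      by (simp add: doubleton_eq_iff)
    then show "i = j"
    proof
      assume "vs ! i = vs ! j \<and> vs ! ((i + 1) mod n) = vs ! ((j + 1) mod n)"
      then show ?thesis using inj[OF i j] by blast
    next
      assume h: "vs ! i = vs ! ((j + 1) mod n) \<and> vs ! ((i + 1) mod n) = vs ! j"
      have h1: "i = (j + 1) mod n" using inj[OF i mi(2)] h by blast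
      have h2: "(i + 1) mod n = j" using inj[OF mi(1) j] h by blast
      show ?thesis
      proof (cases "i + 1 < n")
        case True
        then have ji: "j = i + 1" using h2 by simp
        show ?thesis
        proof (cases "i + 2 < n")
          case True
          then have "(j + 1) mod n = i + 2" using ji by simp
          then show ?thesis using h1 by linarith
        next
          case False
          then have nn: "n = i + 2" using ji j by simp
          then have "(j + 1) mod n = 0" using ji by simp
          then show ?thesis using h1 nn n3 by linarith
        qed
      next
        case False
        then have ni: "i + 1 = n" using i by simp
        then have "j = 0" using h2 by simp
        then have "(j + 1) mod n = 1" using n3 by simp
        then show ?thesis using h1 ni n3 by linarith
      qed
    qed
  qed
  then have "card (f ` {..<n}) = n" by (simp add: card_image)
  then show ?thesis using eq n_def by simp
qed

lemma walk_path:
  "walk E xs \<Longrightarrow> \<exists>ys. walk E ys \<and> distinct ys \<and> hd ys = hd xs \<and> last ys = last xs"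
proof (induction xs)
  case Nil then show ?case by (simp add: walk_def)
next
  case (Cons x xs)
  show ?case
  proof (cases xs)
    case Nil then show ?thesis by (intro exI[of _ "[x]"]) simp
  next
    case (Cons y ys')
    then have e: "{x,y} \<in> E" and w: "walk E xs" using Cons.prems by auto
    obtain p where p: "walk E p" "distinct p" "hd p = hd xs" "last p = last xs" using Cons.IH[OF w] by blast
    have pne: "p \<noteq> []" using p walk_nonempty by blast
    show ?thesis
    proof (cases "x \<in> set p")
      case True
      then obtain p1 p2 where sp: "p = p1 @ x # p2" by (meson split_list)
      have "walk E (x # p2)" using p(1) sp walk_drop[of E p "length p1"] by simp
      moreover have "distinct (x # p2)" using p(2) sp by simp
      moreover have "last (x # p2) = last (x # xs)" using p(4) sp Cons by simp
      ultimately show ?thesis by (intro exI[of _ "x # p2"]) simp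
    next
      case False
      have p': "p = y # tl p" using pne p(3) Cons by (metis hd_Cons_tl list.sel(1))
      have "walk E (x # p)" using p' e p(1) by (metis walk_Cons2)
      moreover have "distinct (x # p)" using False p(2) by simp
      moreover have "last (x # p) = last (x # xs)" using p(4) pne Cons by simp
      ultimately show ?thesis by (intro exI[of _ "x # p"]) simp
    qed
  qed
qed

lemma walk_reach_all: "walk E xs \<Longrightarrow> y \<in> set xs \<Longrightarrow> reachable E (hd xs) y"
proof -
  assume w: "walk E xs" and y: "y \<in> set xs"
  then obtain i where i: "i < length xs" "xs ! i = y" by (meson in_set_conv_nth)
  have "walk E (take (i+1) xs)" using walk_take[OF w] by simp
  moreover have "hd (take (i+1) xs) = hd xs" using i by (simp add: hd_conv_nth)
  moreover have "last (take (i+1) xs) = y" using i by (simp add: take_Suc_conv_app_nth)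
  ultimately show ?thesis unfolding reachable_def by blast
qed

locale G =
  fixes V :: "'a set" and E :: "'a set set" and a b :: 'a
  assumes sg: "simple_graph V E" and cg: "connected_graph V E"
    and aV: "a \<in> V" and bV: "b \<in> V" and ab: "a \<noteq> b" and kE: "{a,b} \<in> E"
begin

abbreviation d where "d i \<equiv> edge_dist E i {a,b}"

lemma edge_form: "e \<in> E \<Longrightarrow> \<exists>u v. u \<in> V \<and> v \<in> V \<and> u \<noteq> v \<and> e = {u,v}"
  using sg unfolding simple_graph_def by blast

lemma edgeV: "{u,v} \<in> E \<Longrightarrow> u \<in> V \<and> v \<in> V"
proof -
  assume "{u,v} \<in> E"
  then obtain p q where "p \<in> V" "q \<in> V" "{u,v} = {p,q}" using edge_form by blast
  then show ?thesis by (auto simp: doubleton_eq_iff)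
qed

lemma finE: "finite E"
proof -
  have "E \<subseteq> Pow V" using edge_form by blast
  moreover have "finite V" using sg simple_graph_def by blast
  ultimately show ?thesis by (meson finite_Pow_iff finite_subset)
qed

lemma reachV: "u \<in> V \<Longrightarrow> v \<in> V \<Longrightarrow> reachable E u v"
  using cg unfolding connected_graph_def by blast

lemma d_eq: "d i = min (gdist E i a) (gdist E i b)"
  unfolding edge_dist_def by simp

lemma d_a[simp]: "d a = 0" and d_b[simp]: "d b = 0"
  by (simp_all add: d_eq)

lemma d_zero: "u \<in> V \<Longrightarrow> d u = 0 \<Longrightarrow> u = a \<or> u = b"
  using gdist_zero reachV aV bV unfolding d_eq by (metis min_def)

lemma d_edge: "{u,v} \<in> E \<Longrightarrow> d v \<le> d u + 1"
proof -
  assume e: "{u,v} \<in> E"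
  then have u: "u \<in> V" using edgeV by blast
  have "gdist E v a \<le> gdist E u a + 1" using gdist_edge[OF e reachV[OF u aV]] .
  moreover have "gdist E v b \<le> gdist E u b + 1" using gdist_edge[OF e reachV[OF u bV]] .
  ultimately show ?thesis unfolding d_eq by linarith
qed

lemma d_parent: "u \<in> V \<Longrightarrow> d u = Suc n \<Longrightarrow> \<exists>w. {u,w} \<in> E \<and> d w = n"
proof -
  assume u: "u \<in> V" and du: "d u = Suc n"
  have "\<exists>w. {u,w} \<in> E \<and> d w \<le> n"
  proof (cases "gdist E u a \<le> gdist E u b")
    case True
    then have "gdist E u a = Suc n" using du unfolding d_eq by simp
    then obtain w where "{u,w} \<in> E" "gdist E w a = n" using gdist_parent reachV[OF u aV] by metis
    then show ?thesis unfolding d_eq by (intro exI[of _ w]) simp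
  next
    case False
    then have "gdist E u b = Suc n" using du unfolding d_eq by simp
    then obtain w where "{u,w} \<in> E" "gdist E w b = n" using gdist_parent reachV[OF u bV] by metis
    then show ?thesis unfolding d_eq by (intro exI[of _ w]) simp
  qed
  then obtain w where w: "{u,w} \<in> E" "d w \<le> n" by blast
  have "{w,u} \<in> E" using w(1) by (simp add: insert_commute)
  then have "d u \<le> d w + 1" by (rule d_edge)
  then show ?thesis using w du by (intro exI[of _ w]) simp
qed

lemma hd_neq_last: "distinct xs \<Longrightarrow> length xs \<ge> 2 \<Longrightarrow> hd xs \<noteq> last xs"
  by (cases xs) (auto simp: last_conv_nth hd_conv_nth nth_eq_iff_index_eq)

lemma core:
  assumes RV: "R \<subseteq> V" and Rcl: "\<forall>x y. x \<in> R \<longrightarrow> {x,y} \<in> E - {{a,b}} \<longrightarrow> y \<in> R"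
  shows "distinct xs \<Longrightarrow> length xs \<ge> 2 \<Longrightarrow> even (length xs) \<Longrightarrow> walk (E - {{a,b}}) xs \<Longrightarrow>
    set xs \<subseteq> R \<Longrightarrow> d (hd xs) = m \<Longrightarrow> d (last xs) = m \<Longrightarrow> \<forall>y\<in>set xs. m \<le> d y \<Longrightarrow>
    (\<exists>vs. 3 \<le> length vs \<and> distinct vs \<and> cycle_edges vs \<subseteq> E \<and> even (length vs)) \<or>
    (\<exists>vs. 3 \<le> length vs \<and> distinct vs \<and> cycle_edges vs \<subseteq> E - {{a,b}} \<and> set vs \<subseteq> R)"
proof (induction m arbitrary: xs)
  case 0
  have ne: "xs \<noteq> []" using 0 by auto
  have hs: "hd xs \<in> set xs" "last xs \<in> set xs" using ne by auto
  have hR: "hd xs \<in> V" "last xs \<in> V" using hs 0(5) RV by blast+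
  have hl: "hd xs \<noteq> last xs" using hd_neq_last 0 by blast
  have hab: "{last xs, hd xs} = {a,b}" using d_zero[OF hR(1)] d_zero[OF hR(2)] 0 hl by auto
  have l3: "length xs \<ge> 3"
  proof (rule ccontr)
    assume "\<not> length xs \<ge> 3"
    then have "length xs = 2" using 0 by simp
    then obtain p q where xs: "xs = [p,q]" by (metis (no_types) One_nat_def Suc_1 length_0_conv length_Suc_conv)
    then have "{p,q} \<in> E - {{a,b}}" using 0 by simp
    moreover have "{p,q} = {a,b}" using hab xs by (auto simp: insert_commute)
    ultimately show False by simp
  qed
  have "walk E xs" using 0 walk_mono by blast
  then have "cycle_edges xs \<subseteq> E" using ce_sub hab kE by metis
  then show ?case using l3 0 by blast
next
  case (Suc m)
  have ne: "xs \<noteq> []" using Suc by auto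
  define u where "u = hd xs"
  define v where "v = last xs"
  have hs: "hd xs \<in> set xs" "last xs \<in> set xs" using ne by auto
  have uR: "u \<in> R" "v \<in> R" using hs Suc.prems(5) u_def v_def by blast+
  then have uV: "u \<in> V" "v \<in> V" using RV by auto
  obtain u' where u': "{u,u'} \<in> E" "d u' = m" using d_parent[OF uV(1)] Suc.prems u_def by blast
  obtain v' where v': "{v,v'} \<in> E" "d v' = m" using d_parent[OF uV(2)] Suc.prems v_def by blast
  have du: "d u = Suc m" "d v = Suc m" using Suc.prems u_def v_def by auto
  have "u \<noteq> a" "u \<noteq> b" "v \<noteq> a" "v \<noteq> b" using du d_a d_b by (metis Zero_not_Suc)+
  then have ne1: "{u,u'} \<noteq> {a,b}" "{v,v'} \<noteq> {a,b}" by (auto simp: doubleton_eq_iff)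
  have eu: "{u,u'} \<in> E - {{a,b}}" and ev: "{v,v'} \<in> E - {{a,b}}" using u' v' ne1 by auto
  have u'R: "u' \<in> R" and v'R: "v' \<in> R" using Rcl uR eu ev by blast+
  have nin: "u' \<notin> set xs" "v' \<notin> set xs" using Suc.prems u' v' by fastforce+
  obtain rest where xs': "xs = u # rest" using ne u_def by (cases xs) auto
  have eu': "{u',u} \<in> E - {{a,b}}" using eu by (simp add: insert_commute)
  have w1: "walk (E - {{a,b}}) (u' # xs)" using xs' eu' Suc.prems(4) by simp
  show ?case
  proof (cases "u' = v'")
    case True
    have "cycle_edges (u' # xs) \<subseteq> E - {{a,b}}"
      using ce_sub[OF w1] ev True v_def ne by (simp add: insert_commute)
    moreover have "distinct (u' # xs)" using nin Suc.prems by simp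
    moreover have "3 \<le> length (u' # xs)" using Suc.prems by simp
    moreover have "set (u' # xs) \<subseteq> R" using u'R Suc.prems by simp
    ultimately show ?thesis by blast
  next
    case False
    let ?ys = "u' # xs @ [v']"
    have "walk (E - {{a,b}}) ((u' # xs) @ [v'])"
      using walk_append[of "u' # xs" "[v']"] w1 ev ne v_def by simp
    then have w2: "walk (E - {{a,b}}) ?ys" by simp
    have "(\<exists>vs. 3 \<le> length vs \<and> distinct vs \<and> cycle_edges vs \<subseteq> E \<and> even (length vs)) \<or>
      (\<exists>vs. 3 \<le> length vs \<and> distinct vs \<and> cycle_edges vs \<subseteq> E - {{a,b}} \<and> set vs \<subseteq> R)"
    proof (rule Suc.IH)
      show "distinct ?ys" using nin False Suc.prems by simp
      show "2 \<le> length ?ys" by simp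
      show "even (length ?ys)" using Suc.prems by simp
      show "walk (E - {{a,b}}) ?ys" by (rule w2)
      show "set ?ys \<subseteq> R" using u'R v'R Suc.prems by simp
      show "d (hd ?ys) = m" using u' by simp
      show "d (last ?ys) = m" using v' by simp
      show "\<forall>y\<in>set ?ys. m \<le> d y" using u' v' Suc.prems by force
    qed
    then show ?thesis .
  qed
qed

end

lemma sign_cancel: "(p::nat) \<noteq> q \<Longrightarrow> p \<le> q + 1 \<Longrightarrow> q \<le> p + 1 \<Longrightarrow> (-1::real) ^ p + (-1) ^ q = 0"
proof -
  assume h: "p \<noteq> q" "p \<le> q + 1" "q \<le> p + 1"
  then have "p = Suc q \<or> q = Suc p" by linarith
  then show ?thesis by auto
qed

context G begin

lemma level_neq:
  assumes RV: "R \<subseteq> V" and Rcl: "\<forall>x y. x \<in> R \<longrightarrow> {x,y} \<in> E - {{a,b}} \<longrightarrow> y \<in> R"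
    and e: "{u,v} \<in> E" "{u,v} \<noteq> {a,b}" and uv: "u \<in> R" "v \<in> R"
    and noeven: "\<not> (\<exists>vs. 3 \<le> length vs \<and> distinct vs \<and> cycle_edges vs \<subseteq> E \<and> even (length vs))"
    and noodd: "\<not> (\<exists>vs. 3 \<le> length vs \<and> distinct vs \<and> cycle_edges vs \<subseteq> E - {{a,b}} \<and> set vs \<subseteq> R)"
  shows "d u \<noteq> d v"
proof
  assume duv: "d u = d v"
  have "u \<noteq> v"
  proof
    assume "u = v"
    then obtain p q where "p \<noteq> q" "{u} = {p,q}" using edge_form[OF e(1)] by auto
    then have "p \<in> {u}" "q \<in> {u}" by auto
    then show False using \<open>p \<noteq> q\<close> by simp
  qed
  have "(\<exists>vs. 3 \<le> length vs \<and> distinct vs \<and> cycle_edges vs \<subseteq> E \<and> even (length vs)) \<or>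
    (\<exists>vs. 3 \<le> length vs \<and> distinct vs \<and> cycle_edges vs \<subseteq> E - {{a,b}} \<and> set vs \<subseteq> R)"
    by (rule core[OF RV Rcl, of "[u,v]" "d u"]) (use \<open>u \<noteq> v\<close> e uv duv in auto)
  then show False using noeven noodd by blast
qed

lemma sign_edge:
  assumes "{u,v} \<in> E" "d u \<noteq> d v"
  shows "(-1::real) ^ d u + (-1) ^ d v = 0"
proof -
  have "{v,u} \<in> E" using assms(1) by (simp add: insert_commute)
  then show ?thesis using sign_cancel assms d_edge by blast
qed

lemma reach_split:
  "walk E xs \<Longrightarrow> hd xs \<in> {a,b} \<Longrightarrow>
    reachable (E - {{a,b}}) a (last xs) \<or> reachable (E - {{a,b}}) b (last xs)"
proof (induction xs rule: rev_induct)
  case Nil then show ?case by (simp add: walk_def)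
next
  case (snoc x xs)
  show ?case
  proof (cases "xs = []")
    case True
    then have "x = a \<or> x = b" using snoc.prems by simp
    then show ?thesis using reach_refl True by (metis last_snoc)
  next
    case False
    have w: "walk E xs" and e: "{last xs, x} \<in> E"
      using walk_append[OF False, of "[x]" E] snoc.prems by auto
    have "reachable (E - {{a,b}}) a (last xs) \<or> reachable (E - {{a,b}}) b (last xs)"
      using snoc.IH[OF w] snoc.prems False by simp
    then show ?thesis
    proof (cases "{last xs, x} = {a,b}")
      case True
      then have "x = a \<or> x = b" by (auto simp: doubleton_eq_iff)
      then show ?thesis using reach_refl[of "E - {{a,b}}" x] by auto
    next
      case False
      then have "{last xs, x} \<in> E - {{a,b}}" using e by simp
      then show ?thesis using \<open>reachable (E - {{a,b}}) a (last xs) \<or> reachable (E - {{a,b}}) b (last xs)\<close>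
        reach_edge by fastforce
    qed
  qed
qed

end

lemma sum_swap:
  fixes s lam :: "'a \<Rightarrow> real" and mu :: "'a set \<Rightarrow> real"
  assumes "finite S" "finite E" "\<forall>i\<in>S. (\<Sum>e\<in>{e \<in> E. i \<in> e}. mu e) = lam i"
  shows "(\<Sum>i\<in>S. s i * lam i) = (\<Sum>e\<in>E. mu e * (\<Sum>i\<in>{i \<in> S. i \<in> e}. s i))"
proof -
  have "(\<Sum>i\<in>S. s i * lam i) = (\<Sum>i\<in>S. \<Sum>e\<in>{e \<in> E. i \<in> e}. s i * mu e)"
  proof (rule sum.cong[OF refl])
    fix i assume "i \<in> S"
    then have "lam i = (\<Sum>e\<in>{e \<in> E. i \<in> e}. mu e)" using assms(3) by simp
    then show "s i * lam i = (\<Sum>e\<in>{e \<in> E. i \<in> e}. s i * mu e)" by (simp add: sum_distrib_left)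
  qed
  also have "\<dots> = (\<Sum>e\<in>E. \<Sum>i\<in>{i \<in> S. i \<in> e}. s i * mu e)"
    by (rule sum.swap_restrict[OF assms(1,2)])
  also have "\<dots> = (\<Sum>e\<in>E. mu e * (\<Sum>i\<in>{i \<in> S. i \<in> e}. s i))"
    by (simp add: sum_distrib_left mult.commute)
  finally show ?thesis .
qed

theorem proposition4p1:
  fixes V :: "'a set" and E :: "'a set set"
    and lam :: "'a \<Rightarrow> real" and mu :: "'a set \<Rightarrow> real" and k :: "'a set"
  assumes bij: "bijective_graph V E"
    and lam_pos: "\<forall>i\<in>V. lam i > 0"
    and sol: "\<forall>i\<in>V. (\<Sum>e\<in>{e \<in> E. i \<in> e}. mu e) = lam i"
    and k: "k \<in> E"
  shows "((\<not> (\<exists>C. is_cycle E C \<and> k \<in> C)) \<longrightarrow>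
            (\<exists>Vk. is_component V (E - {k}) Vk \<and> acyclic_on (E - {k}) Vk
               \<and> (\<forall>C. is_component V (E - {k}) C \<and> acyclic_on (E - {k}) C \<longrightarrow> C = Vk)
               \<and> (\<exists>D. is_component V (E - {k}) D \<and> D \<noteq> Vk \<and> V = Vk \<union> D)
               \<and> mu k = (\<Sum>i\<in>Vk. (-1) ^ edge_dist E i k * lam i)))
       \<and> ((\<exists>C. is_cycle E C \<and> k \<in> C) \<longrightarrow>
            mu k = 1 / 2 * (\<Sum>i\<in>V. (-1) ^ edge_dist E i k * lam i))"
proof -
  have sg: "simple_graph V E" and cg: "connected_graph V E" using bij bijective_graph_def by auto
  obtain C where Cc: "is_cycle E C" and Codd: "odd (card C)" and Cu: "\<forall>C'. is_cycle E C' \<longrightarrow> C' = C"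
    using bij bijective_graph_def by blast
  obtain a b where abV: "a \<in> V" "b \<in> V" and ab: "a \<noteq> b" and kab: "k = {a,b}"
    using sg k unfolding simple_graph_def by blast
  interpret G V E a b using sg cg abV ab k kab by unfold_locales auto
  have finV: "finite V" using sg simple_graph_def by blast
  have noeven: "\<not> (\<exists>vs. 3 \<le> length vs \<and> distinct vs \<and> cycle_edges vs \<subseteq> E \<and> even (length vs))"
  proof
    assume "\<exists>vs. 3 \<le> length vs \<and> distinct vs \<and> cycle_edges vs \<subseteq> E \<and> even (length vs)"
    then obtain vs where vs: "3 \<le> length vs" "distinct vs" "cycle_edges vs \<subseteq> E" "even (length vs)" by blast
    then have "is_cycle E (cycle_edges vs)" unfolding is_cycle_def by blast
    then have "cycle_edges vs = C" using Cu by blast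
    then show False using ce_card[OF vs(2,1)] vs(4) Codd by simp
  qed
  let ?s = "\<lambda>i. (-1::real) ^ d i"
  show ?thesis unfolding kab
  proof (intro conjI impI)
    assume cyc: "\<exists>C. is_cycle E C \<and> {a,b} \<in> C"
    then have kC: "{a,b} \<in> C" using Cu by blast
    have RV: "V \<subseteq> V" by simp
    have Rcl: "\<forall>x y. x \<in> V \<longrightarrow> {x,y} \<in> E - {{a,b}} \<longrightarrow> y \<in> V" using edgeV by blast
    have noodd: "\<not> (\<exists>vs. 3 \<le> length vs \<and> distinct vs \<and> cycle_edges vs \<subseteq> E - {{a,b}} \<and> set vs \<subseteq> V)"
    proof
      assume "\<exists>vs. 3 \<le> length vs \<and> distinct vs \<and> cycle_edges vs \<subseteq> E - {{a,b}} \<and> set vs \<subseteq> V"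
      then obtain vs where vs: "3 \<le> length vs" "distinct vs" "cycle_edges vs \<subseteq> E - {{a,b}}" by blast
      then have "is_cycle E (cycle_edges vs)" unfolding is_cycle_def by blast
      then have "cycle_edges vs = C" using Cu by blast
      then show False using vs(3) kC by blast
    qed
    have eterm: "mu e * (\<Sum>i\<in>{i \<in> V. i \<in> e}. ?s i) = (if e = {a,b} then 2 * mu {a,b} else 0)"
      if eE: "e \<in> E" for e
    proof -
      obtain u v where uv: "u \<in> V" "v \<in> V" "u \<noteq> v" "e = {u,v}" using edge_form[OF eE] by blast
      have "{i \<in> V. i \<in> e} = {u,v}" using uv by auto
      then have su: "(\<Sum>i\<in>{i \<in> V. i \<in> e}. ?s i) = ?s u + ?s v" using uv by simp
      show ?thesis
      proof (cases "e = {a,b}")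
        case True
        then have "u \<in> {a,b}" "v \<in> {a,b}" using uv by auto
        then have "d u = 0" "d v = 0" by auto
        then show ?thesis using su True by simp
      next
        case False
        have "d u \<noteq> d v" using level_neq[OF RV Rcl _ _ _ _ noeven noodd] eE uv False by blast
        then have "?s u + ?s v = 0" using sign_edge eE uv by blast
        then show ?thesis using su False by simp
      qed
    qed
    have "(\<Sum>i\<in>V. ?s i * lam i) = (\<Sum>e\<in>E. mu e * (\<Sum>i\<in>{i \<in> V. i \<in> e}. ?s i))"
      by (rule sum_swap[OF finV finE sol])
    also have "\<dots> = (\<Sum>e\<in>E. (if e = {a,b} then 2 * mu {a,b} else 0))"
      using eterm by (rule sum.cong[OF refl])
    also have "\<dots> = 2 * mu {a,b}" using kE finE by simp
    finally show "mu {a,b} = 1 / 2 * (\<Sum>i\<in>V. (-1) ^ d i * lam i)" by simp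
  next
    assume nocyc: "\<not> (\<exists>C. is_cycle E C \<and> {a,b} \<in> C)"
    let ?E' = "E - {{a,b}}"
    define comp where "comp z = {v \<in> V. reachable ?E' z v}" for z
    have c1: "\<not> reachable ?E' a b"
    proof
      assume "reachable ?E' a b"
      then obtain xs where "walk ?E' xs" "hd xs = a" "last xs = b" unfolding reachable_def by blast
      then obtain ys where ys: "walk ?E' ys" "distinct ys" "hd ys = a" "last ys = b"
        using walk_path by metis
      have ne: "ys \<noteq> []" using ys walk_nonempty by blast
      have l2: "length ys \<ge> 2"
      proof (rule ccontr)
        assume "\<not> length ys \<ge> 2"
        moreover have "length ys > 0" using ne by simp
        ultimately have "length ys = 1" by linarith
        then obtain y where "ys = [y]" by (cases ys) auto
        then show False using ys ab by simp
      qed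
      have l3: "length ys \<ge> 3"
      proof (rule ccontr)
        assume "\<not> length ys \<ge> 3"
        then have "length ys = 2" using l2 by simp
        then obtain p q where yq: "ys = [p,q]" by (metis (no_types) One_nat_def Suc_1 length_0_conv length_Suc_conv)
        then have "{p,q} \<in> ?E'" using ys by simp
        moreover have "{p,q} = {a,b}" using yq ys by simp
        ultimately show False by simp
      qed
      have lh: "{last ys, hd ys} = {a,b}" using ys by (simp add: insert_commute)
      have "walk E ys" using ys walk_mono by blast
      then have "cycle_edges ys \<subseteq> E" using ce_sub lh kE by metis
      then have "is_cycle E (cycle_edges ys)" using l3 ys unfolding is_cycle_def by blast
      moreover have "{a,b} \<in> cycle_edges ys" using ce_last[OF ne] lh by simp
      ultimately show False using nocyc by blast
    qed
    have c2: "reachable ?E' a v \<or> reachable ?E' b v" if vV: "v \<in> V" for v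
    proof -
      obtain xs where "walk E xs" "hd xs = a" "last xs = v" using reachV[OF aV vV] reachable_def by metis
      then show ?thesis using reach_split by fastforce
    qed
    obtain vs where vs: "3 \<le> length vs" "distinct vs" "C = cycle_edges vs" "C \<subseteq> E"
      using Cc unfolding is_cycle_def by blast
    have kC: "{a,b} \<notin> C" using nocyc Cc by blast
    have CE': "cycle_edges vs \<subseteq> ?E'" using vs kC by blast
    have vne: "vs \<noteq> []" using vs by auto
    have wv: "walk ?E' vs" using ce_walk[OF CE' vne] .
    have hv: "hd vs \<in> V" using ce_last[OF vne] vs edgeV by blast
    obtain c x where cx: "{c,x} = {a,b}" "c \<noteq> x" "reachable ?E' c (hd vs)"
    proof (cases "reachable ?E' a (hd vs)")
      case True
      then show ?thesis using that[of a b] ab by blast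
    next
      case False
      then have "reachable ?E' b (hd vs)" using c2[OF hv] by blast
      then show ?thesis using that[of b a] ab by (simp add: insert_commute)
    qed
    have cxc: "(c = a \<and> x = b) \<or> (c = b \<and> x = a)" using cx(1) by (auto simp: doubleton_eq_iff)
    have cxV: "c \<in> V" "x \<in> V" using cx abV by (auto simp: doubleton_eq_iff)
    have ncx: "\<not> reachable ?E' x c"
      using cxc c1 reach_sym[of ?E' a b] reach_sym[of ?E' b a] by blast
    have setc: "set vs \<subseteq> comp c"
    proof
      fix y assume "y \<in> set vs"
      then have "reachable ?E' (hd vs) y" using walk_reach_all[OF wv] by blast
      moreover have "y \<in> V"
      proof -
        obtain i where i: "i < length vs" "vs ! i = y" using \<open>y \<in> set vs\<close> by (meson in_set_conv_nth)
        have "{vs ! i, vs ! ((i + 1) mod length vs)} \<in> E" using ce_mem[OF i(1)] vs(3,4) by blast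
        then show ?thesis using edgeV i(2) by blast
      qed
      ultimately show "y \<in> comp c" using reach_trans[OF cx(3)] unfolding comp_def by blast
    qed
    have disj: "comp c \<inter> comp x = {}"
    proof (rule ccontr)
      assume "comp c \<inter> comp x \<noteq> {}"
      then obtain y where "reachable ?E' c y" "reachable ?E' x y" unfolding comp_def by blast
      then have "reachable ?E' x c" using reach_sym reach_trans by metis
      then show False using ncx by blast
    qed
    have clos: "\<forall>y w. y \<in> comp z \<longrightarrow> {y,w} \<in> ?E' \<longrightarrow> w \<in> comp z" for z
    proof (intro allI impI)
      fix y w assume "y \<in> comp z" "{y,w} \<in> ?E'"
      then have r: "reachable ?E' z y" and e: "{y,w} \<in> ?E'" unfolding comp_def by auto
      have "reachable ?E' z w" using reach_edge[OF r e] .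
      moreover have "w \<in> V" using edgeV e by blast
      ultimately show "w \<in> comp z" unfolding comp_def by blast
    qed
    have compV: "comp z \<subseteq> V" for z unfolding comp_def by blast
    have selfc: "z \<in> comp z" if "z \<in> V" for z using that by (simp add: comp_def reach_refl)
    have cover: "V = comp x \<union> comp c"
    proof
      show "V \<subseteq> comp x \<union> comp c"
      proof
        fix v assume "v \<in> V"
        then have "reachable ?E' a v \<or> reachable ?E' b v" using c2 by blast
        then have "reachable ?E' x v \<or> reachable ?E' c v" using cxc by blast
        then show "v \<in> comp x \<union> comp c" using \<open>v \<in> V\<close> unfolding comp_def by blast
      qed
    qed (use compV in blast)
    have comps: "is_component V ?E' Cm \<longleftrightarrow> Cm = comp x \<or> Cm = comp c" for Cm
    proof
      assume "is_component V ?E' Cm"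
      then obtain z where z: "z \<in> V" "Cm = {v \<in> V. reachable ?E' z v}" unfolding is_component_def by blast
      then have "z \<in> comp x \<or> z \<in> comp c" using cover by blast
      then show "Cm = comp x \<or> Cm = comp c"
      proof
        assume "z \<in> comp x"
        then have "reachable ?E' x z" unfolding comp_def by blast
        then have "\<And>v. reachable ?E' z v \<longleftrightarrow> reachable ?E' x v" using reach_sym reach_trans by metis
        then show ?thesis using z unfolding comp_def by blast
      next
        assume "z \<in> comp c"
        then have "reachable ?E' c z" unfolding comp_def by blast
        then have "\<And>v. reachable ?E' z v \<longleftrightarrow> reachable ?E' c v" using reach_sym reach_trans by metis
        then show ?thesis using z unfolding comp_def by blast
      qed
    next
      assume "Cm = comp x \<or> Cm = comp c"
      then show "is_component V ?E' Cm" using cxV unfolding is_component_def comp_def by blast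
    qed
    have acx: "acyclic_on ?E' (comp x)"
      unfolding acyclic_on_def
    proof
      assume "\<exists>Cy. is_cycle {e \<in> ?E'. e \<subseteq> comp x} Cy"
      then obtain Cy where Cy: "is_cycle {e \<in> ?E'. e \<subseteq> comp x} Cy" by blast
      then have "is_cycle E Cy" unfolding is_cycle_def by blast
      then have "Cy = C" using Cu by blast
      then have "{last vs, hd vs} \<subseteq> comp x" using Cy ce_last[OF vne] vs unfolding is_cycle_def by blast
      moreover have "hd vs \<in> comp c" using setc vne by auto
      ultimately show False using disj by blast
    qed
    have nacc: "\<not> acyclic_on ?E' (comp c)"
    proof -
      have "C \<subseteq> {e \<in> ?E'. e \<subseteq> comp c}" using CE' vs setc ce_subset_set by blast
      then have "is_cycle {e \<in> ?E'. e \<subseteq> comp c} C" using vs unfolding is_cycle_def by blast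
      then show ?thesis unfolding acyclic_on_def by blast
    qed
    have cne: "comp c \<noteq> comp x" using selfc[OF cxV(1)] disj by blast
    have noodd: "\<not> (\<exists>ws. 3 \<le> length ws \<and> distinct ws \<and> cycle_edges ws \<subseteq> ?E' \<and> set ws \<subseteq> comp x)"
    proof
      assume "\<exists>ws. 3 \<le> length ws \<and> distinct ws \<and> cycle_edges ws \<subseteq> ?E' \<and> set ws \<subseteq> comp x"
      then obtain ws where ws: "3 \<le> length ws" "distinct ws" "cycle_edges ws \<subseteq> ?E'" "set ws \<subseteq> comp x" by blast
      then have "cycle_edges ws \<subseteq> {e \<in> ?E'. e \<subseteq> comp x}" using ce_subset_set by blast
      then have "is_cycle {e \<in> ?E'. e \<subseteq> comp x} (cycle_edges ws)" using ws unfolding is_cycle_def by blast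
      then show False using acx unfolding acyclic_on_def by blast
    qed
    have dx: "d x = 0" using cx by (auto simp: doubleton_eq_iff)
    have eterm: "mu e * (\<Sum>i\<in>{i \<in> comp x. i \<in> e}. ?s i) = (if e = {a,b} then mu {a,b} else 0)"
      if eE: "e \<in> E" for e
    proof (cases "e = {a,b}")
      case True
      have "c \<notin> comp x" using ncx unfolding comp_def by blast
      then have "{i \<in> comp x. i \<in> e} = {x}" using True cx selfc[OF cxV(2)] by auto
      then show ?thesis using True dx by simp
    next
      case False
      obtain u v where uv: "u \<in> V" "v \<in> V" "u \<noteq> v" "e = {u,v}" using edge_form[OF eE] by blast
      have eE': "{u,v} \<in> ?E'" "{v,u} \<in> ?E'" using eE False uv by (auto simp: insert_commute)
      show ?thesis
      proof (cases "u \<in> comp x")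
        case True
        then have vx: "v \<in> comp x" using clos eE' by blast
        then have "{i \<in> comp x. i \<in> e} = {u,v}" using True uv by auto
        then have su: "(\<Sum>i\<in>{i \<in> comp x. i \<in> e}. ?s i) = ?s u + ?s v" using uv by simp
        have "d u \<noteq> d v"
          using level_neq[OF compV clos _ _ True vx noeven noodd] eE uv False by blast
        then have "?s u + ?s v = 0" using sign_edge eE uv by blast
        then show ?thesis using su False by simp
      next
        case nu: False
        then have "v \<notin> comp x" using clos eE' by blast
        then have emp: "{i \<in> comp x. i \<in> e} = {}" using nu uv by auto
        show ?thesis unfolding emp using False by simp
      qed
    qed
    have "(\<Sum>i\<in>comp x. ?s i * lam i) = (\<Sum>e\<in>E. mu e * (\<Sum>i\<in>{i \<in> comp x. i \<in> e}. ?s i))"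
      by (rule sum_swap[OF finite_subset[OF compV finV] finE]) (use sol compV in blast)
    also have "\<dots> = (\<Sum>e\<in>E. (if e = {a,b} then mu {a,b} else 0))"
      using eterm by (rule sum.cong[OF refl])
    also have "\<dots> = mu {a,b}" using kE finE by simp
    finally have mux: "mu {a,b} = (\<Sum>i\<in>comp x. (-1) ^ d i * lam i)" by simp
    show "\<exists>Vk. is_component V (E - {{a,b}}) Vk \<and> acyclic_on (E - {{a,b}}) Vk
               \<and> (\<forall>C. is_component V (E - {{a,b}}) C \<and> acyclic_on (E - {{a,b}}) C \<longrightarrow> C = Vk)
               \<and> (\<exists>D. is_component V (E - {{a,b}}) D \<and> D \<noteq> Vk \<and> V = Vk \<union> D)
               \<and> mu {a,b} = (\<Sum>i\<in>Vk. (-1) ^ d i * lam i)"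
    proof (rule exI[of _ "comp x"], intro conjI allI impI)
      show "is_component V ?E' (comp x)" using comps by blast
      show "acyclic_on ?E' (comp x)" by (rule acx)
      show "Cm = comp x" if "is_component V ?E' Cm \<and> acyclic_on ?E' Cm" for Cm
        using that comps[of Cm] nacc by auto
      show "\<exists>D. is_component V ?E' D \<and> D \<noteq> comp x \<and> V = comp x \<union> D"
      proof (intro exI[of _ "comp c"] conjI)
        show "is_component V ?E' (comp c)" using comps[of "comp c"] by simp
      qed (use cne cover in auto)
      show "mu {a,b} = (\<Sum>i\<in>comp x. (-1) ^ d i * lam i)" by (rule mux)
    qed
  qed
qed

end
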